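(* Assume (F), fix $\alpha\in\,]0,1[$, and let $0\le u^+<u^-\le V$ with $\hat\rho_{u^-}>\check\rho_{u^+}$. Then $\check\rho_{u^-}<\check\rho_{u^+}<\hat\rho_{u^-}<\hat\rho_{u^+}$ and $$u^--u^+\ \ge\ \frac{\beta}{2}\,\big(\check\rho_{u^+}-\check\rho_{u^-}\big).$$
   Context: Hypothesis (F): $R>0$; $f\in C^2([0,R];[0,+\infty))$ with $f(\rho)=\rho v(\rho)$, $v\in C^2([0,R];[0,+\infty))$; $f(0)=f(R)=0$; there are $B\ge\beta>0$ with $-B\le f''\le-\beta$ on $[0,R]$; $v'(\rho)<0$ for $\rho\in\,]0,R[$. Let $V:=\max_{[0,R]}v=v(0)$. Define $f_\alpha(\rho):=\alpha f(\rho/\alpha)$ for $\rho\in[0,\alpha R]$. For $u\in[0,V]$: $\tilde\rho_u$ is the unique solution of $f_\alpha'(\rho)=u$; $\varphi_u(\rho):=f_\alpha(\tilde\rho_u)+u(\rho-\tilde\rho_u)$ for $\rho\in[0,R]$; $\mathcal I_u:=\{\rho\in[0,R]: f(\rho)=\varphi_u(\rho)\}$, $\check\rho_u:=\min\mathcal I_u$, $\hat\rho_u:=\max\mathcal I_u$. *)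

theory Defs
  imports "HOL-Analysis.Analysis"
begin

definition f_alpha :: "real \<Rightarrow> (real \<Rightarrow> real) \<Rightarrow> real \<Rightarrow> real" where
  "f_alpha \<alpha> f \<rho> = \<alpha> * f (\<rho> / \<alpha>)"

text \<open>rho_tilde_u: the unique solution in [0, alpha R] of f_alpha'(rho) = u
  (one-sided derivative at the endpoints, i.e. derivative within [0, alpha R]).\<close>
definition rho_tilde :: "(real \<Rightarrow> real) \<Rightarrow> real \<Rightarrow> real \<Rightarrow> real \<Rightarrow> real" where
  "rho_tilde f \<alpha> R u =
     (THE \<rho>. \<rho> \<in> {0..\<alpha> * R} \<and>
        (f_alpha \<alpha> f has_real_derivative u) (at \<rho> within {0..\<alpha> * R}))"

definition phi_u :: "(real \<Rightarrow> real) \<Rightarrow> real \<Rightarrow> real \<Rightarrow> real \<Rightarrow> real \<Rightarrow> real" where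
  "phi_u f \<alpha> R u \<rho> =
     f_alpha \<alpha> f (rho_tilde f \<alpha> R u) + u * (\<rho> - rho_tilde f \<alpha> R u)"

definition I_u :: "(real \<Rightarrow> real) \<Rightarrow> real \<Rightarrow> real \<Rightarrow> real \<Rightarrow> real set" where
  "I_u f \<alpha> R u = {\<rho> \<in> {0..R}. f \<rho> = phi_u f \<alpha> R u \<rho>}"

text \<open>min and max of the (closed, bounded) set I_u, written as Inf / Sup.\<close>
definition rho_check :: "(real \<Rightarrow> real) \<Rightarrow> real \<Rightarrow> real \<Rightarrow> real \<Rightarrow> real" where
  "rho_check f \<alpha> R u = Inf (I_u f \<alpha> R u)"

definition rho_hat :: "(real \<Rightarrow> real) \<Rightarrow> real \<Rightarrow> real \<Rightarrow> real \<Rightarrow> real" where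
  "rho_hat f \<alpha> R u = Sup (I_u f \<alpha> R u)"

end

theory Submission
  imports Defs
begin

lemma deriv_uniq:
  fixes f :: "real \<Rightarrow> real"
  assumes "a < b" "x \<in> {a..b}"
    "(f has_real_derivative D) (at x within {a..b})"
    "(f has_real_derivative E) (at x within {a..b})"
  shows "D = E"
proof -
  have "(f has_vector_derivative D) (at x within cbox a b)" "(f has_vector_derivative E) (at x within cbox a b)"
    using assms by (auto simp: has_real_derivative_iff_has_vector_derivative)
  then show ?thesis using vector_derivative_unique_within_closed_interval[of a b x f D E] assms by auto
qed

lemma fprime_dec:
  fixes f f' f'' :: "real \<Rightarrow> real"
  assumes f'_deriv: "\<forall>x\<in>{0..R}. (f' has_real_derivative f'' x) (at x within {0..R})"
    and bnd: "\<forall>x\<in>{0..R}. f'' x \<le> - \<beta>"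
    and pq: "0 \<le> p" "p \<le> q" "q \<le> R"
  shows "f' q + \<beta> * q \<le> f' p + \<beta> * p"
proof -
  have c: "continuous_on {0..R} f'"
    by (rule DERIV_continuous_on) (use f'_deriv in auto)
  have "(\<lambda>x. f' x + \<beta> * x) p \<ge> (\<lambda>x. f' x + \<beta> * x) q"
  proof (rule DERIV_nonpos_imp_decreasing_open[OF pq(2)])
    fix x assume x: "p < x" "x < q"
    have x0: "0 < x" "x < R" using x pq by auto
    have "(f' has_real_derivative f'' x) (at x within {0..R})" using f'_deriv x0 by auto
    then have "(f' has_real_derivative f'' x) (at x)"
      using at_within_Icc_at[OF x0] by simp
    then have D: "((\<lambda>x. f' x + \<beta> * x) has_real_derivative f'' x + \<beta>) (at x)"
      by (auto intro!: derivative_eq_intros)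
    have "x \<in> {0..R}" using x0 by auto
    then have "f'' x \<le> - \<beta>" using bnd by blast
    then have "f'' x + \<beta> \<le> 0" by linarith
    note D this
    then show "\<exists>y. ((\<lambda>x. f' x + \<beta> * x) has_real_derivative y) (at x) \<and> y \<le> 0" using D by blast
  next
    show "continuous_on {p..q} (\<lambda>x. f' x + \<beta> * x)"
      by (intro continuous_intros continuous_on_subset[OF c]) (use pq in auto)
  qed
  then show ?thesis by simp
qed

lemma tangent_ineq:
  fixes f f' f'' :: "real \<Rightarrow> real"
  assumes f_deriv: "\<forall>x\<in>{0..R}. (f has_real_derivative f' x) (at x within {0..R})"
    and f'_deriv: "\<forall>x\<in>{0..R}. (f' has_real_derivative f'' x) (at x within {0..R})"
    and bnd: "\<forall>x\<in>{0..R}. f'' x \<le> - \<beta>"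
    and p: "0 \<le> p" "p \<le> R" and q: "0 \<le> q" "q \<le> R"
  shows "f q \<le> f p + f' p * (q - p) - \<beta> / 2 * (q - p)^2"
proof -
  define h where "h = (\<lambda>s. f p + f' p * (s - p) - \<beta> / 2 * (s - p)^2 - f s)"
  have c: "continuous_on {0..R} f"
    by (rule DERIV_continuous_on) (use f_deriv in auto)
  have hc: "continuous_on {a..b} h" if "0 \<le> a" "b \<le> R" for a b
    unfolding h_def by (intro continuous_intros continuous_on_subset[OF c]) (use that in auto)
  have hd: "(h has_real_derivative f' p - \<beta> * (s - p) - f' s) (at s)" if "0 < s" "s < R" for s
  proof -
    have "(f has_real_derivative f' s) (at s within {0..R})" using f_deriv that by auto
    then have "(f has_real_derivative f' s) (at s)"
      using at_within_Icc_at[OF that] by simp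
    then show ?thesis unfolding h_def
      by (auto intro!: derivative_eq_intros simp: power2_eq_square algebra_simps)
  qed
  have "h p \<le> h q"
  proof (cases "p \<le> q")
    case True
    show ?thesis
    proof (rule DERIV_nonneg_imp_increasing_open[OF True _ hc[OF p(1) q(2)]])
      fix x assume x: "p < x" "x < q"
      have "f' x + \<beta> * x \<le> f' p + \<beta> * p"
        by (rule fprime_dec[OF f'_deriv bnd]) (use x p q in auto)
      then show "\<exists>y. (h has_real_derivative y) (at x) \<and> 0 \<le> y"
        using hd[of x] x p q by (intro exI[of _ "f' p - \<beta> * (x - p) - f' x"]) (auto simp: algebra_simps)
    qed
  next
    case False
    then have qp: "q \<le> p" by simp
    show ?thesis
    proof (rule DERIV_nonpos_imp_decreasing_open[OF qp _ hc[OF q(1) p(2)]])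
      fix x assume x: "q < x" "x < p"
      have "f' p + \<beta> * p \<le> f' x + \<beta> * x"
        by (rule fprime_dec[OF f'_deriv bnd]) (use x p q in auto)
      then show "\<exists>y. (h has_real_derivative y) (at x) \<and> y \<le> 0"
        using hd[of x] x p q by (intro exI[of _ "f' p - \<beta> * (x - p) - f' x"]) (auto simp: algebra_simps)
    qed
  qed
  then show ?thesis unfolding h_def by simp
qed


lemma chord_ineq:
  fixes f f' f'' P :: "real \<Rightarrow> real"
  assumes f_deriv: "\<forall>x\<in>{0..R}. (f has_real_derivative f' x) (at x within {0..R})"
    and f'_deriv: "\<forall>x\<in>{0..R}. (f' has_real_derivative f'' x) (at x within {0..R})"
    and bnd: "\<forall>x\<in>{0..R}. f'' x \<le> - \<beta>"
    and P: "\<forall>r. P r = A + u * r"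
    and pyq: "0 \<le> p" "p \<le> y" "y \<le> q" "q \<le> R"
  shows "(q - p) * (f y - P y) \<ge> (q - y) * (f p - P p) + (y - p) * (f q - P q)
           + \<beta> / 2 * (y - p) * (q - y) * (q - p)"
proof -
  have T1: "f p \<le> f y + f' y * (p - y) - \<beta> / 2 * (p - y)^2"
    by (rule tangent_ineq[OF f_deriv f'_deriv bnd]) (use pyq in auto)
  have T2: "f q \<le> f y + f' y * (q - y) - \<beta> / 2 * (q - y)^2"
    by (rule tangent_ineq[OF f_deriv f'_deriv bnd]) (use pyq in auto)
  have M1: "(q - y) * f p \<le> (q - y) * (f y + f' y * (p - y) - \<beta> / 2 * (p - y)^2)"
    by (rule mult_left_mono[OF T1]) (use pyq in auto)
  have M2: "(y - p) * f q \<le> (y - p) * (f y + f' y * (q - y) - \<beta> / 2 * (q - y)^2)"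
    by (rule mult_left_mono[OF T2]) (use pyq in auto)
  have E1: "(q - y) * (f y + f' y * (p - y) - \<beta> / 2 * (p - y)^2) + (y - p) * (f y + f' y * (q - y) - \<beta> / 2 * (q - y)^2)
     = (q - p) * f y - \<beta> / 2 * (y - p) * (q - y) * (q - p)"
    by (simp add: field_simps power2_eq_square)
  have E2: "(q - p) * P y = (q - y) * P p + (y - p) * P q"
    using P by (simp add: algebra_simps)
  have E3: "(q - p) * (f y - P y) = (q - p) * f y - (q - p) * P y"
    "(q - y) * (f p - P p) = (q - y) * f p - (q - y) * P p"
    "(y - p) * (f q - P q) = (y - p) * f q - (y - p) * P q"
    by (simp_all add: right_diff_distrib)
  show ?thesis using M1 M2 E1 E2 E3 by linarith
qed

theorem mainTheorem6:
  fixes R B \<beta> \<alpha> up um :: real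
    and f f' f'' v v' v'' :: "real \<Rightarrow> real"
  assumes R_pos: "R > 0"
    and f_deriv: "\<forall>x\<in>{0..R}. (f has_real_derivative f' x) (at x within {0..R})"
    and f'_deriv: "\<forall>x\<in>{0..R}. (f' has_real_derivative f'' x) (at x within {0..R})"
    and f''_cont: "continuous_on {0..R} f''"
    and f_nonneg: "\<forall>x\<in>{0..R}. f x \<ge> 0"
    and f_eq: "\<forall>x\<in>{0..R}. f x = x * v x"
    and v_deriv: "\<forall>x\<in>{0..R}. (v has_real_derivative v' x) (at x within {0..R})"
    and v'_deriv: "\<forall>x\<in>{0..R}. (v' has_real_derivative v'' x) (at x within {0..R})"
    and v''_cont: "continuous_on {0..R} v''"
    and v_nonneg: "\<forall>x\<in>{0..R}. v x \<ge> 0"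
    and f0: "f 0 = 0" and fR: "f R = 0"
    and B_beta: "B \<ge> \<beta>" "\<beta> > 0"
    and f''_bounds: "\<forall>x\<in>{0..R}. - B \<le> f'' x \<and> f'' x \<le> - \<beta>"
    and v'_neg: "\<forall>x\<in>{0<..<R}. v' x < 0"
    and alpha: "0 < \<alpha>" "\<alpha> < 1"
    and u_bounds: "0 \<le> up" "up < um" "um \<le> v 0"
    and hyp: "rho_hat f \<alpha> R um > rho_check f \<alpha> R up"
  shows "rho_check f \<alpha> R um < rho_check f \<alpha> R up
         \<and> rho_check f \<alpha> R up < rho_hat f \<alpha> R um
         \<and> rho_hat f \<alpha> R um < rho_hat f \<alpha> R up
         \<and> um - up \<ge> \<beta> / 2 * (rho_check f \<alpha> R up - rho_check f \<alpha> R um)"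
proof -
  have bnd: "\<forall>x\<in>{0..R}. f'' x \<le> - \<beta>" using f''_bounds by auto
  note Tg = tangent_ineq[OF f_deriv f'_deriv bnd]
  note Ch = chord_ineq[OF f_deriv f'_deriv bnd]
  have fcont: "continuous_on {0..R} f"
    by (rule DERIV_continuous_on) (use f_deriv in auto)
  have f'cont: "continuous_on {0..R} f'"
    by (rule DERIV_continuous_on) (use f'_deriv in auto)
  have f'dec: "f' q < f' p" if "0 \<le> p" "p < q" "q \<le> R" for p q
  proof -
    have "f' q + \<beta> * q \<le> f' p + \<beta> * p"
      by (rule fprime_dec[OF f'_deriv bnd]) (use that in auto)
    moreover have "\<beta> * p < \<beta> * q" using that B_beta by simp
    ultimately show ?thesis by linarith
  qed
  have f'inj: "p = q" if "p \<in> {0..R}" "q \<in> {0..R}" "f' p = f' q" for p q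
    using f'dec[of p q] f'dec[of q p] that by (cases p q rule: linorder_cases) auto
  have f'0: "f' 0 = v 0"
  proof -
    have "((\<lambda>x. x * v x) has_real_derivative 1 * v 0 + 0 * v' 0) (at 0 within {0..R})"
      using v_deriv R_pos by (auto intro!: derivative_eq_intros)
    then have "((\<lambda>x. x * v x) has_real_derivative v 0) (at 0 within {0..R})" by simp
    then have "(f has_real_derivative v 0) (at 0 within {0..R})"
      by (rule has_field_derivative_transform_within[OF _ zero_less_one])
         (use R_pos f_eq in \<open>auto simp: dist_real_def\<close>)
    then show ?thesis using deriv_uniq[OF R_pos, of 0 f "f' 0" "v 0"] f_deriv R_pos by auto
  qed
  have f'R: "f' R < 0"
  proof -
    have "f 0 \<le> f R + f' R * (0 - R) - \<beta> / 2 * (0 - R)^2"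
      by (rule Tg) (use R_pos in auto)
    then have "f' R * R \<le> - \<beta> / 2 * R^2" using f0 fR by (simp add: algebra_simps)
    moreover have "\<beta> / 2 * R^2 > 0" using B_beta R_pos by simp
    ultimately have "f' R * R < 0" by linarith
    then show ?thesis using R_pos by (simp add: mult_less_0_iff)
  qed
  have exy: "\<exists>y. 0 \<le> y \<and> y \<le> R \<and> f' y = u" if "0 \<le> u" "u \<le> v 0" for u
    by (rule IVT2'[OF _ _ _ f'cont]) (use that f'0 f'R R_pos in auto)
  have img: "(\<lambda>r. r / \<alpha>) ` {0..\<alpha> * R} = {0..R}"
  proof
    show "(\<lambda>r. r / \<alpha>) ` {0..\<alpha> * R} \<subseteq> {0..R}" using alpha by (auto simp: field_simps)
    show "{0..R} \<subseteq> (\<lambda>r. r / \<alpha>) ` {0..\<alpha> * R}"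
    proof
      fix x assume "x \<in> {0..R}"
      then have "\<alpha> * x \<in> {0..\<alpha> * R}" "x = (\<alpha> * x) / \<alpha>" using alpha by auto
      then show "x \<in> (\<lambda>r. r / \<alpha>) ` {0..\<alpha> * R}" by blast
    qed
  qed
  have FA: "(f_alpha \<alpha> f has_real_derivative f' y) (at (\<alpha> * y) within {0..\<alpha> * R})"
    if "y \<in> {0..R}" for y
  proof -
    have d1: "((\<lambda>r. r / \<alpha>) has_real_derivative 1 / \<alpha>) (at (\<alpha> * y) within {0..\<alpha> * R})"
      using alpha by (auto intro!: derivative_eq_intros)
    have "(f has_real_derivative f' y) (at ((\<lambda>r. r / \<alpha>) (\<alpha> * y)) within ((\<lambda>r. r / \<alpha>) ` {0..\<alpha> * R}))"
      using f_deriv that alpha img by simp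
    from DERIV_image_chain[OF this d1]
    have "((\<lambda>r. \<alpha> * (f \<circ> (\<lambda>r. r / \<alpha>)) r) has_real_derivative \<alpha> * (f' y * (1 / \<alpha>))) (at (\<alpha> * y) within {0..\<alpha> * R})"
      by (rule DERIV_cmult)
    moreover have "(\<lambda>r. \<alpha> * (f \<circ> (\<lambda>r. r / \<alpha>)) r) = f_alpha \<alpha> f"
      by (auto simp: f_alpha_def)
    moreover have "\<alpha> * (f' y * (1 / \<alpha>)) = f' y" using alpha by simp
    ultimately show ?thesis by simp
  qed
  have tilde: "rho_tilde f \<alpha> R (f' y) = \<alpha> * y" if y: "y \<in> {0..R}" for y
    unfolding rho_tilde_def
  proof (rule the_equality)
    show "\<alpha> * y \<in> {0..\<alpha> * R} \<and> (f_alpha \<alpha> f has_real_derivative f' y) (at (\<alpha> * y) within {0..\<alpha> * R})"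
      using FA[OF y] y alpha by (auto intro: mult_left_mono)
  next
    fix r assume r: "r \<in> {0..\<alpha> * R} \<and> (f_alpha \<alpha> f has_real_derivative f' y) (at r within {0..\<alpha> * R})"
    define z where "z = r / \<alpha>"
    have rz: "r = \<alpha> * z" using alpha unfolding z_def by simp
    have z: "z \<in> {0..R}" using r alpha unfolding z_def by (auto simp: field_simps)
    have "f' z = f' y"
      using deriv_uniq[of 0 "\<alpha> * R" r "f_alpha \<alpha> f" "f' z" "f' y"] FA[OF z] r rz alpha R_pos by auto
    then have "z = y" using f'inj z y by blast
    then show "r = \<alpha> * y" using rz by simp
  qed
  define Pf where "Pf = (\<lambda>y r. \<alpha> * f y + f' y * (r - \<alpha> * y))"
  define Sf where "Sf = (\<lambda>y. {r \<in> {0..R}. f r = Pf y r})"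
  have PfA: "\<forall>r. Pf y r = (\<alpha> * f y - f' y * \<alpha> * y) + f' y * r" for y
    unfolding Pf_def by (simp add: algebra_simps)
  have ISf: "I_u f \<alpha> R (f' y) = Sf y" if "y \<in> {0..R}" for y
    using tilde[OF that] alpha unfolding I_u_def Sf_def Pf_def phi_u_def f_alpha_def by simp
  have G1: "\<alpha> * f y \<le> f (\<alpha> * y)" if y: "y \<in> {0..R}" for y
  proof (cases "y = 0")
    case True then show ?thesis using f0 by simp
  next
    case False
    then have yp: "y > 0" using y by simp
    have "(y - 0) * (f (\<alpha> * y) - 0) \<ge> (y - \<alpha> * y) * (f 0 - 0) + (\<alpha> * y - 0) * (f y - 0)
           + \<beta> / 2 * (\<alpha> * y - 0) * (y - \<alpha> * y) * (y - 0)"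
      by (rule Ch[where A=0 and u=0]) (use y yp alpha in \<open>auto simp: mult_le_cancel_right1\<close>)
    moreover have "\<beta> / 2 * (\<alpha> * y - 0) * (y - \<alpha> * y) * (y - 0) \<ge> 0"
      using B_beta alpha yp by (simp add: mult_le_cancel_right1)
    moreover have "(y - \<alpha> * y) * (f 0 - 0) = 0" using f0 by simp
    moreover have "(\<alpha> * y - 0) * (f y - 0) = y * (\<alpha> * f y)" by simp
    moreover have "(y - 0) * (f (\<alpha> * y) - 0) = y * f (\<alpha> * y)" by simp
    ultimately have "y * f (\<alpha> * y) \<ge> y * (\<alpha> * f y)" by linarith
    then show ?thesis using yp by simp
  qed
  have G2: "0 \<le> Pf y 0" if y: "y \<in> {0..R}" for y
  proof -
    have "f 0 \<le> f y + f' y * (0 - y) - \<beta> / 2 * (0 - y)^2" by (rule Tg) (use y R_pos in auto)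
    moreover have "\<beta> / 2 * (0 - y)^2 \<ge> 0" using B_beta by simp
    ultimately have "0 \<le> f y - f' y * y" using f0 by simp
    then have "0 \<le> \<alpha> * (f y - f' y * y)" using alpha by simp
    then show ?thesis unfolding Pf_def by (simp add: algebra_simps)
  qed
  have hcont: "continuous_on {a..b} (\<lambda>r. f r - Pf y r)" if "0 \<le> a" "b \<le> R" for a b y
    unfolding Pf_def by (intro continuous_intros continuous_on_subset[OF fcont]) (use that in auto)
  have Sprops: "Inf (Sf y) \<in> Sf y \<and> Sup (Sf y) \<in> Sf y \<and> (\<forall>z\<in>Sf y. Inf (Sf y) \<le> z \<and> z \<le> Sup (Sf y))"
    if y: "y \<in> {0..R}" and u0: "0 \<le> f' y" for y
  proof -
    have "\<exists>r. 0 \<le> r \<and> r \<le> \<alpha> * y \<and> f r - Pf y r = 0"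
    proof (rule IVT'[OF _ _ _ hcont])
      show "f 0 - Pf y 0 \<le> 0" using G2[OF y] f0 by simp
      show "0 \<le> f (\<alpha> * y) - Pf y (\<alpha> * y)" using G1[OF y] unfolding Pf_def by simp
      show "0 \<le> \<alpha> * y" using y alpha by simp
      show "\<alpha> * y \<le> R" using y alpha by (smt (verit) atLeastAtMost_iff mult_left_le_one_le)
    qed simp
    then have ne: "Sf y \<noteq> {}" unfolding Sf_def using y alpha
      by (smt (verit, best) atLeastAtMost_iff empty_Collect_eq mult_left_le_one_le)
    have cl: "closed (Sf y)"
    proof -
      have "closed {r \<in> {0..R}. f r - Pf y r = 0}"
        by (rule continuous_closed_preimage_constant[OF hcont]) auto
      then show ?thesis unfolding Sf_def by simp
    qed
    have bb: "bdd_below (Sf y)" "bdd_above (Sf y)" unfolding Sf_def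
      by (auto intro!: bdd_belowI[of _ 0] bdd_aboveI[of _ R])
    show ?thesis using closed_contains_Inf[OF ne bb(1) cl] closed_contains_Sup[OF ne bb(2) cl]
      cInf_lower[OF _ bb(1)] cSup_upper[OF _ bb(2)] by blast
  qed
  obtain ym where ym: "ym \<in> {0..R}" "f' ym = um" using exy[of um] u_bounds by auto
  obtain yp where yp: "yp \<in> {0..R}" "f' yp = up" using exy[of up] u_bounds by auto
  have ylt: "ym < yp"
  proof (rule ccontr)
    assume "\<not> ym < yp"
    then have "yp = ym \<or> yp < ym" by auto
    then have "f' ym \<le> f' yp" using f'dec[of yp ym] ym yp by auto
    then show False using ym yp u_bounds by simp
  qed
  define a where "a = Inf (Sf ym)"
  define b where "b = Sup (Sf ym)"
  define c where "c = Inf (Sf yp)"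
  define d where "d = Sup (Sf yp)"
  have chk: "rho_check f \<alpha> R um = a" "rho_hat f \<alpha> R um = b"
    "rho_check f \<alpha> R up = c" "rho_hat f \<alpha> R up = d"
    unfolding rho_check_def rho_hat_def a_def b_def c_def d_def
    using ISf[OF ym(1)] ISf[OF yp(1)] ym yp by auto
  have SPm: "Inf (Sf ym) \<in> Sf ym \<and> Sup (Sf ym) \<in> Sf ym \<and> (\<forall>z\<in>Sf ym. Inf (Sf ym) \<le> z \<and> z \<le> Sup (Sf ym))"
    by (rule Sprops) (use ym u_bounds in auto)
  have SPp: "Inf (Sf yp) \<in> Sf yp \<and> Sup (Sf yp) \<in> Sf yp \<and> (\<forall>z\<in>Sf yp. Inf (Sf yp) \<le> z \<and> z \<le> Sup (Sf yp))"
    by (rule Sprops) (use yp u_bounds in auto)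
  define Pm where "Pm = Pf ym"
  define Pp where "Pp = Pf yp"
  have a: "0 \<le> a" "a \<le> R" "f a = Pm a" and b: "0 \<le> b" "b \<le> R" "f b = Pm b"
    and c: "0 \<le> c" "c \<le> R" "f c = Pp c" and d: "0 \<le> d" "d \<le> R" "f d = Pp d"
    using SPm SPp unfolding a_def b_def c_def d_def Pm_def Pp_def Sf_def by auto
  have amin: "a \<le> z" if "z \<in> {0..R}" "f z = Pm z" for z
    using SPm that unfolding a_def Sf_def Pm_def by auto
  have dmax: "z \<le> d" if "z \<in> {0..R}" "f z = Pp z" for z
    using SPp that unfolding d_def Sf_def Pp_def by auto
  have cb: "c < b" using hyp chk by simp
  define tm where "tm = \<alpha> * ym"
  define tp where "tp = \<alpha> * yp"
  have du: "um - up > 0" using u_bounds by simp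
  define x where "x = (Pp 0 - Pm 0) / (um - up)"
  have diff: "Pm r - Pp r = (um - up) * (r - x)" for r
    using du unfolding x_def Pm_def Pp_def Pf_def using ym yp by (simp add: field_simps)
  have PmA: "\<forall>r. Pm r = (\<alpha> * f ym - f' ym * \<alpha> * ym) + f' ym * r" using PfA unfolding Pm_def by blast
  have PpA: "\<forall>r. Pp r = (\<alpha> * f yp - f' yp * \<alpha> * yp) + f' yp * r" using PfA unfolding Pp_def by blast
  have tmR: "0 \<le> tm" "tm \<le> R" "0 \<le> tp" "tp \<le> R" unfolding tm_def tp_def using ym yp alpha
    by (smt (verit) atLeastAtMost_iff mult_left_le_one_le mult_nonneg_nonneg)+
  have gtm: "f tm - Pm tm \<ge> 0" using G1[OF ym(1)] unfolding tm_def Pm_def Pf_def by simp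
  have gtp: "f tp - Pp tp \<ge> 0" using G1[OF yp(1)] unfolding tp_def Pp_def Pf_def by simp
  have xtp: "x < tp"
  proof -
    have "f yp \<le> f ym + f' ym * (yp - ym) - \<beta> / 2 * (yp - ym)^2" by (rule Tg) (use ym yp in auto)
    moreover have "\<beta> / 2 * (yp - ym)^2 > 0" using B_beta ylt by simp
    ultimately have "f yp < f ym + um * (yp - ym)" using ym by simp
    then have "\<alpha> * f yp < \<alpha> * (f ym + um * (yp - ym))" using alpha by simp
    then have "Pm tp - Pp tp > 0" unfolding Pm_def Pp_def Pf_def tp_def using ym yp
      by (simp add: algebra_simps)
    then have "(um - up) * (tp - x) > 0" using diff by simp
    then show ?thesis using du by (simp add: zero_less_mult_iff)
  qed
  have tmx: "tm < x"
  proof -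
    have "f ym \<le> f yp + f' yp * (ym - yp) - \<beta> / 2 * (ym - yp)^2" by (rule Tg) (use ym yp in auto)
    moreover have "\<beta> / 2 * (ym - yp)^2 > 0" using B_beta ylt by simp
    ultimately have "f ym < f yp + up * (ym - yp)" using yp by simp
    then have "\<alpha> * f ym < \<alpha> * (f yp + up * (ym - yp))" using alpha by simp
    then have "Pm tm - Pp tm < 0" unfolding Pm_def Pp_def Pf_def tm_def using ym yp
      by (simp add: algebra_simps)
    then have "(um - up) * (tm - x) < 0" using diff by simp
    then show ?thesis using du by (simp add: mult_less_0_iff)
  qed
  have cx: "c < x"
  proof (rule ccontr)
    assume "\<not> c < x"
    then have xc: "x \<le> c" by simp
    have C: "(b - tm) * (f c - Pm c) \<ge> (b - c) * (f tm - Pm tm) + (c - tm) * (f b - Pm b)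
           + \<beta> / 2 * (c - tm) * (b - c) * (b - tm)"
      by (rule Ch[OF PmA]) (use tmR tmx xc cb b in auto)
    have "f c - Pm c = - ((um - up) * (c - x))" using c diff[of c] by simp
    also have "\<dots> \<le> 0" using du xc by simp
    finally have "(b - tm) * (f c - Pm c) \<le> 0" using tmx xc cb
      by (simp add: mult_nonneg_nonpos)
    moreover have "(b - c) * (f tm - Pm tm) \<ge> 0" using cb gtm by simp
    moreover have "(c - tm) * (f b - Pm b) = 0" using b by simp
    moreover have "\<beta> / 2 * (c - tm) * (b - c) * (b - tm) > 0" using B_beta tmx xc cb by simp
    ultimately show False using C by linarith
  qed
  have xb: "x < b"
  proof (rule ccontr)
    assume "\<not> x < b"
    then have bx: "b \<le> x" by simp
    have C: "(tp - c) * (f b - Pp b) \<ge> (tp - b) * (f c - Pp c) + (b - c) * (f tp - Pp tp)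
           + \<beta> / 2 * (b - c) * (tp - b) * (tp - c)"
      by (rule Ch[OF PpA]) (use tmR xtp bx cb c in auto)
    have "f b - Pp b = (um - up) * (b - x)" using b diff[of b] by simp
    also have "\<dots> \<le> 0" using du bx by (simp add: mult_nonneg_nonpos)
    finally have "(tp - c) * (f b - Pp b) \<le> 0" using xtp bx cb
      by (simp add: mult_nonneg_nonpos)
    moreover have "(b - c) * (f tp - Pp tp) \<ge> 0" using cb gtp by simp
    moreover have "(tp - b) * (f c - Pp c) = 0" using c by simp
    moreover have "\<beta> / 2 * (b - c) * (tp - b) * (tp - c) > 0" using B_beta xtp bx cb by simp
    ultimately show False using C by linarith
  qed
  have gmc: "f c - Pm c = (um - up) * (x - c)" using c diff[of c] by (simp add: algebra_simps)
  have gpb: "f b - Pp b = (um - up) * (b - x)" using b diff[of b] by simp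
  have ac: "a < c"
  proof (rule ccontr)
    assume "\<not> a < c"
    then have ca: "c \<le> a" by simp
    have pos: "f c - Pm c > 0" using gmc du cx by simp
    have "\<exists>z. 0 \<le> z \<and> z \<le> c \<and> f z - Pm z = 0"
    proof (rule IVT'[OF _ _ _ hcont[of 0 c ym, folded Pm_def]])
      show "f 0 - Pm 0 \<le> 0" using G2[OF ym(1)] f0 unfolding Pm_def by simp
    qed (use pos c in auto)
    then obtain z where z: "0 \<le> z" "z \<le> c" "f z = Pm z" by auto
    have "a \<le> z" using amin[of z] z c by auto
    then have "z = c" using z ca by simp
    then show False using z pos by simp
  qed
  have bd: "b < d"
  proof (rule ccontr)
    assume "\<not> b < d"
    then have db: "d \<le> b" by simp
    have pos: "f b - Pp b > 0" using gpb du xb by simp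
    have "\<exists>z. b \<le> z \<and> z \<le> R \<and> f z - Pp z = 0"
    proof (rule IVT2'[OF _ _ _ hcont[of b R yp, folded Pp_def]])
      have "0 \<le> Pp 0" using G2[OF yp(1)] unfolding Pp_def by simp
      moreover have "Pp R = Pp 0 + up * R" unfolding Pp_def Pf_def using yp by (simp add: algebra_simps)
      moreover have "up * R \<ge> 0" using u_bounds R_pos by simp
      ultimately show "f R - Pp R \<le> 0" using fR by simp
    qed (use pos b in auto)
    then obtain z where z: "b \<le> z" "z \<le> R" "f z = Pp z" by auto
    have "z \<le> d" using dmax[of z] z b by auto
    then have "z = b" using z db by simp
    then show False using z pos by simp
  qed
  have ineq: "um - up \<ge> \<beta> / 2 * (c - a)"
  proof -
    have C: "(b - a) * (f c - Pm c) \<ge> (b - c) * (f a - Pm a) + (c - a) * (f b - Pm b)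
           + \<beta> / 2 * (c - a) * (b - c) * (b - a)"
      by (rule Ch[OF PmA]) (use a b ac cb in auto)
    then have "(b - a) * (f c - Pm c) \<ge> (b - a) * (\<beta> / 2 * (c - a) * (b - c))"
      using a b by (simp add: algebra_simps)
    then have "f c - Pm c \<ge> \<beta> / 2 * (c - a) * (b - c)" using ac cb by simp
    moreover have "f c - Pm c \<le> (um - up) * (b - c)" using gmc du xb by simp
    ultimately have "(um - up) * (b - c) \<ge> (\<beta> / 2 * (c - a)) * (b - c)" by simp
    then show ?thesis using cb by simp
  qed
  show ?thesis using chk ac cb bd ineq by simp
qed

end
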